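(* Let $X_1, \dots, X_n$ be nonnegative random variables on a probability space $(\Omega, \mathcal{F}, \mathbb{P})$, let $\emptyset \neq \mathcal{S} \subseteq \{1, \dots, n\}$, and let $\mathbf{u} = (u_\lambda : \emptyset \neq \lambda \subseteq \mathcal{S})$ be real thresholds satisfying $u_\mu \geq u_\lambda$ for all nonempty $\mu \subsetneq \lambda \subseteq \mathcal{S}$. Then the collection $\{ B_\mu(\mathbf{u}) : \mu \subseteq \mathcal{S} \}$ forms a partition of $\Omega$ (the events are pairwise disjoint and their union is $\Omega$).
   Context: For $\mu \subseteq \mathcal{S}$ and $u \in \mathbb{R}$, $A_\mu(u) := \bigcap_{i \in \mu} \{X_i > u\}$, with $A_\emptyset(u) := \Omega$. For $\mu \subseteq \mathcal{S}$ (including $\mu = \emptyset$), $B_\mu(\mathbf{u}) := A_\mu(u_\mu) \cap \bigcap_{\mu \subsetneq \lambda \subseteq \mathcal{S}} \overline{A_\lambda(u_\lambda)}$, where $\overline{E}$ denotes the complement of an event $E$; in particular $B_\emptyset(\mathbf{u}) = \bigcap_{\emptyset \neq \lambda \subseteq \mathcal{S}} \overline{A_\lambda(u_\lambda)}$. *)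

theory Defs
  imports "HOL-Probability.Probability"
begin

definition evA :: "'a measure \<Rightarrow> (nat \<Rightarrow> 'a \<Rightarrow> real) \<Rightarrow> nat set \<Rightarrow> real \<Rightarrow> 'a set" where
  "evA M X \<mu> t = (if \<mu> = {} then space M else (\<Inter>i\<in>\<mu>. {\<omega> \<in> space M. X i \<omega> > t}))"

definition evB :: "'a measure \<Rightarrow> (nat \<Rightarrow> 'a \<Rightarrow> real) \<Rightarrow> nat set \<Rightarrow> (nat set \<Rightarrow> real) \<Rightarrow> nat set \<Rightarrow> 'a set" where
  "evB M X S u \<mu> = evA M X \<mu> (u \<mu>) \<inter>
     (\<Inter>L\<in>{L. \<mu> \<subset> L \<and> L \<subseteq> S}. space M - evA M X L (u L))"

end

theory Submission
  imports Defs
begin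

theorem lemma16:
  fixes M :: "'a measure" and X :: "nat \<Rightarrow> 'a \<Rightarrow> real" and n :: nat
    and S :: "nat set" and u :: "nat set \<Rightarrow> real"
  assumes "prob_space M"
    and "\<And>i. i \<in> {1..n} \<Longrightarrow> X i \<in> borel_measurable M"
    and "\<And>i \<omega>. i \<in> {1..n} \<Longrightarrow> \<omega> \<in> space M \<Longrightarrow> X i \<omega> \<ge> 0"
    and "S \<noteq> {}" and "S \<subseteq> {1..n}"
    and "\<And>\<mu> L. \<mu> \<noteq> {} \<Longrightarrow> \<mu> \<subset> L \<Longrightarrow> L \<subseteq> S \<Longrightarrow> u \<mu> \<ge> u L"
  shows "disjoint_family_on (evB M X S u) (Pow S)
     \<and> (\<Union>\<mu>\<in>Pow S. evB M X S u \<mu>) = space M"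
proof
  have memA: "w \<in> evA M X m t \<longleftrightarrow> w \<in> space M \<and> (\<forall>i\<in>m. X i w > t)" for w m t
    by (auto simp: evA_def)
  have memB: "w \<in> evB M X S u m \<longleftrightarrow> w \<in> evA M X m (u m) \<and>
      (\<forall>L. m \<subset> L \<and> L \<subseteq> S \<longrightarrow> w \<notin> evA M X L (u L))" for w m
  proof
    assume "w \<in> evB M X S u m"
    thus "w \<in> evA M X m (u m) \<and> (\<forall>L. m \<subset> L \<and> L \<subseteq> S \<longrightarrow> w \<notin> evA M X L (u L))"
      unfolding evB_def by blast
  next
    assume h: "w \<in> evA M X m (u m) \<and> (\<forall>L. m \<subset> L \<and> L \<subseteq> S \<longrightarrow> w \<notin> evA M X L (u L))"
    hence "w \<in> space M" using memA by blast
    thus "w \<in> evB M X S u m" using h unfolding evB_def by blast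
  qed
  show "disjoint_family_on (evB M X S u) (Pow S)"
  proof (unfold disjoint_family_on_def, intro ballI impI)
    fix m v assume m: "m \<in> Pow S" and v: "v \<in> Pow S" and ne: "m \<noteq> v"
    show "evB M X S u m \<inter> evB M X S u v = {}"
    proof (rule ccontr)
      assume "evB M X S u m \<inter> evB M X S u v \<noteq> {}"
      then obtain w where wm: "w \<in> evB M X S u m" and wv: "w \<in> evB M X S u v" by blast
      have Am: "w \<in> evA M X m (u m)" and Av: "w \<in> evA M X v (u v)"
        using wm wv memB by auto
      show False
      proof (cases "m \<subset> v")
        case True thus False using wm Av v memB by auto
      next
        case F1: False
        show False
        proof (cases "v \<subset> m")
          case True thus False using wv Am m memB by auto
        next
          case False
          hence mne: "m \<noteq> {}" and vne: "v \<noteq> {}" and ml: "m \<subset> m \<union> v" and vl: "v \<subset> m \<union> v"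
            using F1 ne by auto
          have LS: "m \<union> v \<subseteq> S" using m v by auto
          have um: "u m \<ge> u (m \<union> v)" using assms(6)[OF mne ml LS] .
          have uv: "u v \<ge> u (m \<union> v)" using assms(6)[OF vne vl LS] .
          have "w \<in> evA M X (m \<union> v) (u (m \<union> v))"
            using Am Av um uv unfolding memA by fastforce
          thus False using wm ml LS memB by blast
        qed
      qed
    qed
  qed
  show "(\<Union>\<mu>\<in>Pow S. evB M X S u \<mu>) = space M"
  proof
    show "(\<Union>\<mu>\<in>Pow S. evB M X S u \<mu>) \<subseteq> space M"
      by (auto simp: evB_def evA_def split: if_splits)
  next
    show "space M \<subseteq> (\<Union>\<mu>\<in>Pow S. evB M X S u \<mu>)"
    proof
      fix w assume w: "w \<in> space M"
      let ?F = "{m \<in> Pow S. w \<in> evA M X m (u m)}"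
      have fin: "finite S" using assms(5) finite_subset by blast
      have "finite ?F" using fin by auto
      moreover have "{} \<in> ?F" using w by (auto simp: evA_def)
      ultimately obtain m where mF: "m \<in> ?F" and mx: "\<forall>b\<in>?F. m \<le> b \<longrightarrow> m = b"
        using finite_has_maximal[of ?F] by blast
      have "w \<in> evB M X S u m"
        unfolding memB using mF mx by auto
      thus "w \<in> (\<Union>\<mu>\<in>Pow S. evB M X S u \<mu>)" using mF by blast
    qed
  qed
qed

end
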